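(* For every integer $n\geq 1$, $$c_n(231,312 : 231)=c_n(312,231 : 312)=2^{n-1}.$$
   Context: $S_n$ is the symmetric group on $[n]=\{1,\dots,n\}$, and a permutation $\pi\in S_n$ is written in one-line notation $\pi=\pi_1\pi_2\cdots\pi_n$ with $\pi_i=\pi(i)$. For $\tau\in S_k$, $k\le n$, $\pi$ contains $\tau$ if there are indices $i_1<\dots<i_k$ with $\pi_{i_s}>\pi_{i_t}$ iff $\tau_s>\tau_t$ for all $1\le s<t\le k$; otherwise $\pi$ avoids $\tau$. $\pi^2$ denotes the composition $\pi\circ\pi$. For patterns $\sigma_1,\sigma_2,\rho$, $c_n(\sigma_1,\sigma_2 : \rho)$ denotes the number of permutations $\pi\in S_n$ such that $\pi$ avoids both $\sigma_1$ and $\sigma_2$ and $\pi^2$ avoids $\rho$. *)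

theory Defs
  imports "HOL-Combinatorics.Permutations"
begin

text \<open>A pattern tau in S_k is given by its one-line
  notation as a list [tau_1, ..., tau_k] (0-based list indexing: tau ! s = tau_(s+1)).\<close>

definition contains :: "nat \<Rightarrow> (nat \<Rightarrow> nat) \<Rightarrow> nat list \<Rightarrow> bool" where
  "contains n \<pi> \<tau> \<longleftrightarrow>
     (\<exists>i :: nat \<Rightarrow> nat.
        (\<forall>s t. s < t \<and> t < length \<tau> \<longrightarrow> i s < i t) \<and>
        (\<forall>s < length \<tau>. 1 \<le> i s \<and> i s \<le> n) \<and>
        (\<forall>s t. s < t \<and> t < length \<tau> \<longrightarrow>
                 (\<pi> (i s) > \<pi> (i t) \<longleftrightarrow> \<tau> ! s > \<tau> ! t)))"

definition avoids :: "nat \<Rightarrow> (nat \<Rightarrow> nat) \<Rightarrow> nat list \<Rightarrow> bool" where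
  "avoids n \<pi> \<tau> \<longleftrightarrow> \<not> contains n \<pi> \<tau>"

definition c :: "nat \<Rightarrow> nat list \<Rightarrow> nat list \<Rightarrow> nat list \<Rightarrow> nat" where
  "c n \<sigma>1 \<sigma>2 \<rho> = card {\<pi>. \<pi> permutes {1..n} \<and> avoids n \<pi> \<sigma>1 \<and> avoids n \<pi> \<sigma>2
                              \<and> avoids n (\<pi> \<circ> \<pi>) \<rho>}"

end

theory Submission imports Defs begin

lemma contains3:
  "contains n \<pi> [p,q,r] \<longleftrightarrow> (\<exists>x y z. 1 \<le> x \<and> x < y \<and> y < z \<and> z \<le> n \<and>
     (\<pi> x > \<pi> y \<longleftrightarrow> p > q) \<and> (\<pi> x > \<pi> z \<longleftrightarrow> p > r) \<and> (\<pi> y > \<pi> z \<longleftrightarrow> q > r))"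
proof
  assume "contains n \<pi> [p,q,r]"
  then obtain i where i1: "\<forall>s t. s < t \<and> t < 3 \<longrightarrow> i s < i t"
    and i2: "\<forall>s < 3. 1 \<le> i s \<and> i s \<le> n"
    and i3: "\<forall>s t. s < t \<and> t < 3 \<longrightarrow> (\<pi> (i s) > \<pi> (i t) \<longleftrightarrow> [p,q,r] ! s > [p,q,r] ! t)"
    unfolding contains_def by (metis length_Cons list.size(3) numeral_3_eq_3)
  have "1 \<le> i 0 \<and> i 0 < i 1 \<and> i 1 < i 2 \<and> i 2 \<le> n \<and>
     (\<pi> (i 0) > \<pi> (i 1) \<longleftrightarrow> p > q) \<and> (\<pi> (i 0) > \<pi> (i 2) \<longleftrightarrow> p > r) \<and> (\<pi> (i 1) > \<pi> (i 2) \<longleftrightarrow> q > r)"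
    using i1[rule_format, of 0 1] i1[rule_format, of 1 2] i2[rule_format, of 0] i2[rule_format, of 2]
      i3[rule_format, of 0 1] i3[rule_format, of 0 2] i3[rule_format, of 1 2]
    by (simp add: numeral_2_eq_2)
  then show "\<exists>x y z. 1 \<le> x \<and> x < y \<and> y < z \<and> z \<le> n \<and>
     (\<pi> x > \<pi> y \<longleftrightarrow> p > q) \<and> (\<pi> x > \<pi> z \<longleftrightarrow> p > r) \<and> (\<pi> y > \<pi> z \<longleftrightarrow> q > r)" by blast
next
  assume "\<exists>x y z. 1 \<le> x \<and> x < y \<and> y < z \<and> z \<le> n \<and>
     (\<pi> x > \<pi> y \<longleftrightarrow> p > q) \<and> (\<pi> x > \<pi> z \<longleftrightarrow> p > r) \<and> (\<pi> y > \<pi> z \<longleftrightarrow> q > r)"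
  then obtain x y z where h: "1 \<le> x" "x < y" "y < z" "z \<le> n"
     "(\<pi> x > \<pi> y \<longleftrightarrow> p > q)" "(\<pi> x > \<pi> z \<longleftrightarrow> p > r)" "(\<pi> y > \<pi> z \<longleftrightarrow> q > r)" by blast
  define i where "i = (\<lambda>s::nat. if s = 0 then x else if s = 1 then y else z)"
  have cases3: "\<And>s t::nat. s < t \<Longrightarrow> t < 3 \<Longrightarrow> (s = 0 \<and> t = 1) \<or> (s = 0 \<and> t = 2) \<or> (s = 1 \<and> t = 2)"
    by arith
  have cases3': "\<And>s::nat. s < 3 \<Longrightarrow> s = 0 \<or> s = 1 \<or> s = 2" by arith
  show "contains n \<pi> [p,q,r]"
    unfolding contains_def
  proof (intro exI[of _ i] conjI allI impI)
    fix s t assume "s < t \<and> t < length [p,q,r]"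
    then have "(s = 0 \<and> t = 1) \<or> (s = 0 \<and> t = 2) \<or> (s = 1 \<and> t = 2)" using cases3 by simp
    then show "i s < i t" using h by (auto simp: i_def)
  next
    fix s t assume "s < t \<and> t < length [p,q,r]"
    then have "(s = 0 \<and> t = 1) \<or> (s = 0 \<and> t = 2) \<or> (s = 1 \<and> t = 2)" using cases3 by simp
    then show "(\<pi> (i s) > \<pi> (i t) \<longleftrightarrow> [p,q,r] ! s > [p,q,r] ! t)" using h
      by (auto simp: i_def numeral_2_eq_2)
  next
    fix s assume "s < length [p,q,r]"
    then have "s = 0 \<or> s = 1 \<or> s = 2" using cases3' by simp
    then show "1 \<le> i s" "i s \<le> n" using h by (auto simp: i_def)
  qed
qed

definition A231 :: "nat \<Rightarrow> (nat \<Rightarrow> nat) \<Rightarrow> bool" where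
  "A231 n \<pi> \<longleftrightarrow> (\<forall>x y z. 1 \<le> x \<and> x < y \<and> y < z \<and> z \<le> n \<longrightarrow> \<not> (\<pi> z < \<pi> x \<and> \<pi> x \<le> \<pi> y))"
definition A312 :: "nat \<Rightarrow> (nat \<Rightarrow> nat) \<Rightarrow> bool" where
  "A312 n \<pi> \<longleftrightarrow> (\<forall>x y z. 1 \<le> x \<and> x < y \<and> y < z \<and> z \<le> n \<longrightarrow> \<not> (\<pi> y \<le> \<pi> z \<and> \<pi> z < \<pi> x))"

lemma avoids231: "avoids n \<pi> [2,3,1] \<longleftrightarrow> A231 n \<pi>"
  unfolding avoids_def contains3 A231_def by (auto simp: not_less; meson le_less_trans less_le_trans not_le order_trans)

lemma avoids312: "avoids n \<pi> [3,1,2] \<longleftrightarrow> A312 n \<pi>"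
  unfolding avoids_def contains3 A312_def by (auto simp: not_less; meson le_less_trans less_le_trans not_le order_trans)


definition T :: "nat \<Rightarrow> nat \<Rightarrow> (nat \<Rightarrow> nat) \<Rightarrow> nat \<Rightarrow> nat" where
  "T n j \<sigma> = (\<lambda>x. if x < j then \<sigma> x else if x \<le> n then n + j - x else x)"

definition S :: "nat \<Rightarrow> (nat \<Rightarrow> nat) set" where
  "S n = {\<pi>. \<pi> permutes {1..n} \<and> A231 n \<pi> \<and> A312 n \<pi>}"

lemma decomp:
  assumes "\<pi> \<in> S n" "n \<ge> 1"
  shows "\<exists>j\<in>{1..n}. \<exists>\<sigma>\<in>S (j-1). \<pi> = T n j \<sigma>"
proof -
  have perm: "\<pi> permutes {1..n}" and a1: "A231 n \<pi>" and a2: "A312 n \<pi>" using assms by (auto simp: S_def)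
  have inj: "inj \<pi>" using perm by (rule permutes_inj)
  have out: "\<And>x. x \<notin> {1..n} \<Longrightarrow> \<pi> x = x" using perm by (rule permutes_not_in)
  have rng: "\<And>x. x \<in> {1..n} \<Longrightarrow> \<pi> x \<in> {1..n}" using permutes_in_image[OF perm] by blast
  have "n \<in> \<pi> ` {1..n}" using permutes_image[OF perm] assms(2) by auto
  then obtain j where j: "j \<in> {1..n}" "\<pi> j = n" by auto
  have injE: "\<And>x y. \<pi> x = \<pi> y \<Longrightarrow> x = y" using inj by (auto dest: injD)
  have lt: "\<pi> x < \<pi> y" if "1 \<le> x" "x < j" "j < y" "y \<le> n" for x y
  proof (rule ccontr)
    assume "\<not> \<pi> x < \<pi> y"
    moreover have "\<pi> x \<noteq> \<pi> y" using injE that by force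
    ultimately have "\<pi> y < \<pi> x" by simp
    moreover have "\<pi> x \<le> \<pi> j" using rng[of x] that j by auto
    ultimately show False using a1 that unfolding A231_def by blast
  qed
  have ltn: "\<pi> z < n" if "z \<in> {1..n}" "z \<noteq> j" for z
    using rng[OF that(1)] injE[of z j] j that by fastforce
  have dec: "\<pi> z < \<pi> y" if "j \<le> y" "y < z" "z \<le> n" for y z
  proof (cases "y = j")
    case True then show ?thesis using ltn[of z] that j by auto
  next
    case False
    show ?thesis
    proof (rule ccontr)
      assume "\<not> \<pi> z < \<pi> y"
      then have "\<pi> y \<le> \<pi> z" by simp
      moreover have "\<pi> z < \<pi> j" using ltn[of z] that j by auto
      ultimately show False using a2 that j False unfolding A312_def
        by (metis atLeastAtMost_iff le_neq_implies_less)
    qed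
  qed
  have low: "\<pi> x < j" if "x < j" for x
  proof (cases "x = 0")
    case True then show ?thesis using out[of 0] that by auto
  next
    case False
    show ?thesis
    proof (rule ccontr)
      assume "\<not> \<pi> x < j"
      then have ge: "j \<le> \<pi> x" by simp
      let ?B = "insert x {j..n}"
      have sub: "\<pi> ` ?B \<subseteq> {j..n}"
      proof
        fix v assume "v \<in> \<pi> ` ?B"
        then obtain b where b: "b \<in> ?B" "v = \<pi> b" by blast
        show "v \<in> {j..n}"
        proof (cases "b = x")
          case True then show ?thesis using b ge rng[of x] False that j by auto
        next
          case bx: False
          then have "j \<le> b" "b \<le> n" using b by auto
          show ?thesis
          proof (cases "b = j")
            case True then show ?thesis using b j by auto
          next
            case False
            then have "\<pi> x < \<pi> b" using lt[of x b] \<open>x \<noteq> 0\<close> that \<open>j \<le> b\<close> \<open>b \<le> n\<close> by auto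
            then show ?thesis using b ge rng[of b] \<open>j \<le> b\<close> \<open>b \<le> n\<close> j by auto
          qed
        qed
      qed
      have "card (\<pi> ` ?B) = card ?B" using inj by (meson card_image inj_on_subset subset_UNIV)
      also have "card ?B = card {j..n} + 1" using that by simp
      finally have "card (\<pi> ` ?B) > card {j..n}" by simp
      moreover have "card (\<pi> ` ?B) \<le> card {j..n}" using card_mono[OF _ sub] by simp
      ultimately show False by simp
    qed
  qed
  define \<sigma> where "\<sigma> = (\<lambda>x. if x < j then \<pi> x else x)"
  have \<sigma>img: "\<sigma> ` {1..j-1} = {1..j-1}"
  proof (rule endo_inj_surj)
    show "\<sigma> ` {1..j-1} \<subseteq> {1..j-1}"
    proof
      fix v assume "v \<in> \<sigma> ` {1..j-1}"
      then obtain b where b: "b \<in> {1..j-1}" "v = \<sigma> b" by auto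
      then have "v = \<pi> b" "b < j" using j by (auto simp: \<sigma>_def)
      then show "v \<in> {1..j-1}" using low[of b] rng[of b] b j by auto
    qed
    show "inj_on \<sigma> {1..j-1}" using injE j by (auto simp: inj_on_def \<sigma>_def)
  qed simp
  have \<sigma>perm: "\<sigma> permutes {1..j-1}"
  proof (rule bij_imp_permutes)
    show "bij_betw \<sigma> {1..j-1} {1..j-1}"
      unfolding bij_betw_def using \<sigma>img injE j by (auto simp: inj_on_def \<sigma>_def)
    fix x assume "x \<notin> {1..j-1}"
    then show "\<sigma> x = x" using out[of 0] j by (cases "x = 0") (auto simp: \<sigma>_def)
  qed
  have \<sigma>S: "\<sigma> \<in> S (j-1)"
  proof -
    have "A231 (j-1) \<sigma>" unfolding A231_def
    proof (intro allI impI)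
      fix x y z assume h: "1 \<le> x \<and> x < y \<and> y < z \<and> z \<le> j - 1"
      then have "z \<le> n" "z < j" using j by auto
      then show "\<not> (\<sigma> z < \<sigma> x \<and> \<sigma> x \<le> \<sigma> y)" using a1 h unfolding A231_def \<sigma>_def by auto
    qed
    moreover have "A312 (j-1) \<sigma>" unfolding A312_def
    proof (intro allI impI)
      fix x y z assume h: "1 \<le> x \<and> x < y \<and> y < z \<and> z \<le> j - 1"
      then have "z \<le> n" "z < j" using j by auto
      then show "\<not> (\<sigma> y \<le> \<sigma> z \<and> \<sigma> z < \<sigma> x)" using a2 h unfolding A312_def \<sigma>_def by auto
    qed
    ultimately show ?thesis using \<sigma>perm by (simp add: S_def)
  qed
  have gej: "j \<le> \<pi> y" if "j \<le> y" "y \<le> n" for y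
  proof (rule ccontr)
    assume "\<not> j \<le> \<pi> y"
    then have "\<pi> y \<in> {1..j-1}" using rng[of y] that j by auto
    then obtain x where "x \<in> {1..j-1}" "\<sigma> x = \<pi> y" using \<sigma>img by (metis imageE)
    then have "x < j" by auto
    then have "\<pi> x = \<pi> y" using \<open>\<sigma> x = \<pi> y\<close> by (simp add: \<sigma>_def)
    then show False using injE[of x y] that \<open>x < j\<close> by simp
  qed
  have up: "\<pi> (j + k) \<le> n - k" if "j + k \<le> n" for k
    using that
  proof (induction k)
    case 0 then show ?case using j by simp
  next
    case (Suc k)
    then have "\<pi> (j + Suc k) < \<pi> (j + k)" using dec[of "j+k" "j + Suc k"] by simp
    then show ?case using Suc by simp
  qed
  have dn: "\<pi> (n - k) \<ge> j + k" if "j + k \<le> n" for k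
    using that
  proof (induction k)
    case 0 then show ?case using gej[of n] j by simp
  next
    case (Suc k)
    then have "\<pi> (n - Suc k) > \<pi> (n - k)" using dec[of "n - Suc k" "n - k"] by simp
    then show ?case using Suc by simp
  qed
  have rev: "\<pi> y = n + j - y" if "j \<le> y" "y \<le> n" for y
  proof -
    have "\<pi> y \<le> n + j - y" using up[of "y - j"] that by simp
    moreover have "j + (n - y) \<le> n" using that by simp
    then have "\<pi> (n - (n - y)) \<ge> j + (n - y)" by (rule dn)
    then have "\<pi> y \<ge> n + j - y" using that by simp
    ultimately show ?thesis by simp
  qed
  have "\<pi> = T n j \<sigma>"
  proof
    fix x show "\<pi> x = T n j \<sigma> x"
      using rev[of x] out[of x] j by (auto simp: T_def \<sigma>_def)
  qed
  then show ?thesis using \<sigma>S j by blast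
qed


lemma S_props:
  assumes "\<sigma> \<in> S m"
  shows "\<sigma> permutes {1..m}" "A231 m \<sigma>" "A312 m \<sigma>"
  using assms by (auto simp: S_def)

lemma T_S:
  assumes "\<sigma> \<in> S (j-1)" "j \<in> {1..n}"
  shows "T n j \<sigma> \<in> S n"
proof -
  have perm: "\<sigma> permutes {1..j-1}" and a1: "A231 (j-1) \<sigma>" and a2: "A312 (j-1) \<sigma>"
    using S_props[OF assms(1)] by auto
  have lowj: "\<sigma> x < j" if "x < j" for x
  proof (cases "x = 0")
    case True then show ?thesis using permutes_not_in[OF perm, of 0] that by auto
  next
    case False then have "\<sigma> x \<in> {1..j-1}" using permutes_in_image[OF perm, of x] that by auto
    then show ?thesis using assms(2) by auto
  qed
  have pos: "\<sigma> x \<ge> 1" if "1 \<le> x" "x < j" for x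
    using permutes_in_image[OF perm, of x] that by auto
  have injs: "\<And>x y. \<sigma> x = \<sigma> y \<Longrightarrow> x = y" using permutes_inj[OF perm] by (auto dest: injD)
  let ?T = "T n j \<sigma>"
  have img: "?T ` {1..n} \<subseteq> {1..n}"
  proof
    fix v assume "v \<in> ?T ` {1..n}"
    then obtain x where x: "x \<in> {1..n}" "v = ?T x" by blast
    show "v \<in> {1..n}"
    proof (cases "x < j")
      case True then show ?thesis using x lowj[of x] pos[of x] assms(2) by (auto simp: T_def)
    next
      case False then show ?thesis using x assms(2) by (auto simp: T_def)
    qed
  qed
  have inj: "inj_on ?T {1..n}"
  proof (rule inj_onI)
    fix x y assume h: "x \<in> {1..n}" "y \<in> {1..n}" "?T x = ?T y"
    show "x = y"
    proof (cases "x < j"; cases "y < j")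
      assume "x < j" "y < j" then show ?thesis using h injs by (auto simp: T_def)
    next
      assume "x < j" "\<not> y < j" then show ?thesis using h lowj[of x] by (auto simp: T_def)
    next
      assume "\<not> x < j" "y < j" then show ?thesis using h lowj[of y] by (auto simp: T_def)
    next
      assume "\<not> x < j" "\<not> y < j" then show ?thesis using h by (auto simp: T_def)
    qed
  qed
  have Tperm: "?T permutes {1..n}"
  proof (rule bij_imp_permutes)
    show "bij_betw ?T {1..n} {1..n}" unfolding bij_betw_def
      using inj endo_inj_surj[OF _ img inj] by simp
    fix x assume "x \<notin> {1..n}"
    then show "?T x = x" using permutes_not_in[OF perm, of 0] assms(2)
      by (cases "x = 0") (auto simp: T_def)
  qed
  have b1: "A231 n ?T" unfolding A231_def
  proof (intro allI impI notI)
    fix x y z assume h: "1 \<le> x \<and> x < y \<and> y < z \<and> z \<le> n" and v: "?T z < ?T x \<and> ?T x \<le> ?T y"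
    consider "z < j" | "j \<le> x" | "x < j" "j \<le> z" by linarith
    then show False
    proof cases
      case 1
      then have "z \<le> j - 1" by simp
      then show False using a1[unfolded A231_def, rule_format, of x y z] 1 h v unfolding T_def by auto
    next
      case 2 then show False using h v unfolding T_def by auto
    next
      case 3 then show False using h v lowj[of x] unfolding T_def by auto
    qed
  qed
  have b2: "A312 n ?T" unfolding A312_def
  proof (intro allI impI notI)
    fix x y z assume h: "1 \<le> x \<and> x < y \<and> y < z \<and> z \<le> n" and v: "?T y \<le> ?T z \<and> ?T z < ?T x"
    consider "z < j" | "j \<le> x" | "x < j" "j \<le> z" by linarith
    then show False
    proof cases
      case 1
      then have "z \<le> j - 1" by simp
      then show False using a2[unfolded A312_def, rule_format, of x y z] 1 h v unfolding T_def by auto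
    next
      case 2 then show False using h v unfolding T_def by auto
    next
      case 3 then show False using h v lowj[of x] unfolding T_def by auto
    qed
  qed
  show ?thesis using Tperm b1 b2 by (simp add: S_def)
qed

lemma T_inj:
  assumes "\<sigma>1 \<in> S (j-1)" "\<sigma>2 \<in> S (j-1)" "T n j \<sigma>1 = T n j \<sigma>2"
  shows "\<sigma>1 = \<sigma>2"
proof
  fix x
  show "\<sigma>1 x = \<sigma>2 x"
  proof (cases "x < j")
    case True then show ?thesis using fun_cong[OF assms(3), of x] by (simp add: T_def)
  next
    case False
    then have "x \<notin> {1..j-1}" by auto
    then show ?thesis
      using permutes_not_in[OF S_props(1)[OF assms(1)], of x] permutes_not_in[OF S_props(1)[OF assms(2)], of x]
      by auto
  qed
qed

lemma T_at_j: "j \<le> n \<Longrightarrow> T n j \<sigma> j = n" by (simp add: T_def)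

lemma T_disj:
  assumes "\<sigma>1 \<in> S (j1-1)" "\<sigma>2 \<in> S (j2-1)" "j1 \<in> {1..n}" "j2 \<in> {1..n}" "j1 < j2"
  shows "T n j1 \<sigma>1 \<noteq> T n j2 \<sigma>2"
proof
  assume eq: "T n j1 \<sigma>1 = T n j2 \<sigma>2"
  have "\<sigma>2 j1 \<in> {1..j2-1}" using permutes_in_image[OF S_props(1)[OF assms(2)], of j1] assms by auto
  then have "\<sigma>2 j1 < n" using assms by auto
  then have "T n j2 \<sigma>2 j1 < n" using assms by (simp add: T_def)
  moreover have "T n j1 \<sigma>1 j1 = n" using assms by (simp add: T_def)
  ultimately show False using eq by simp
qed

lemma finite_S: "finite (S m)"
proof (rule finite_subset)
  show "S m \<subseteq> {p. p permutes {1..m}}" by (auto simp: S_def)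
qed (simp add: finite_permutations)

lemma S_decomp: "n \<ge> 1 \<Longrightarrow> S n = (\<Union>j\<in>{1..n}. T n j ` S (j-1))"
  using decomp T_S by blast

lemma card_S_rec: "n \<ge> 1 \<Longrightarrow> card (S n) = (\<Sum>j\<in>{1..n}. card (S (j-1)))"
proof -
  assume n: "n \<ge> 1"
  have "card (S n) = card (\<Union>j\<in>{1..n}. T n j ` S (j-1))" using S_decomp[OF n] by simp
  also have "\<dots> = (\<Sum>j\<in>{1..n}. card (T n j ` S (j-1)))"
  proof (rule card_UN_disjoint)
    show "\<forall>i\<in>{1..n}. finite (T n i ` S (i - 1))" using finite_S by simp
    show "\<forall>i\<in>{1..n}. \<forall>j\<in>{1..n}. i \<noteq> j \<longrightarrow> T n i ` S (i - 1) \<inter> T n j ` S (j - 1) = {}"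
    proof (intro ballI impI)
      fix i j assume h: "i \<in> {1..n}" "j \<in> {1..n}" "i \<noteq> j"
      show "T n i ` S (i - 1) \<inter> T n j ` S (j - 1) = {}"
      proof (cases "i < j")
        case True then show ?thesis using T_disj h by blast
      next
        case False then have "j < i" using h by simp
        then show ?thesis using T_disj[OF _ _ h(2) h(1) \<open>j < i\<close>] by fastforce
      qed
    qed
  qed simp
  also have "\<dots> = (\<Sum>j\<in>{1..n}. card (S (j-1)))"
  proof (rule sum.cong)
    fix j assume "j \<in> {1..n}"
    have "inj_on (T n j) (S (j-1))" by (rule inj_onI) (rule T_inj)
    then show "card (T n j ` S (j-1)) = card (S (j-1))" by (rule card_image)
  qed simp
  finally show ?thesis .
qed

lemma S0: "S 0 = {id}"
  by (auto simp: S_def A231_def A312_def)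

lemma card_S: "card (S (Suc n)) = 2 ^ n"
proof -
  have rec: "card (S (Suc m)) = (\<Sum>k<Suc m. card (S k))" for m
  proof -
    have "card (S (Suc m)) = (\<Sum>j\<in>{1..Suc m}. card (S (j-1)))" by (rule card_S_rec) simp
    also have "\<dots> = (\<Sum>k<Suc m. card (S k))"
    proof (rule sum.reindex_bij_witness[of _ Suc "\<lambda>j. j - 1"]) qed auto
    finally show ?thesis .
  qed
  have "(\<Sum>k<Suc m. card (S k)) = 2 ^ m" for m
  proof (induction m)
    case 0 then show ?case using S0 by simp
  next
    case (Suc m)
    have "(\<Sum>k<Suc (Suc m). card (S k)) = (\<Sum>k<Suc m. card (S k)) + card (S (Suc m))" by simp
    also have "\<dots> = 2 ^ m + 2 ^ m" using Suc rec[of m] by simp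
    finally show ?case by simp
  qed
  then show ?thesis using rec by simp
qed

lemma S_invol: "\<pi> \<in> S n \<Longrightarrow> \<pi> \<circ> \<pi> = id"
proof (induction n arbitrary: \<pi> rule: less_induct)
  case (less n)
  show ?case
  proof (cases "n = 0")
    case True then show ?thesis using less.prems S0 by simp
  next
    case False
    then obtain j \<sigma> where j: "j \<in> {1..n}" "\<sigma> \<in> S (j-1)" "\<pi> = T n j \<sigma>"
      using decomp[OF less.prems] by auto
    have inv: "\<sigma> (\<sigma> x) = x" for x using less.IH[of "j-1" \<sigma>] j by (auto simp: fun_eq_iff)
    have perm: "\<sigma> permutes {1..j-1}" using S_props j by auto
    have lowj: "\<sigma> x < j" if "x < j" for x
    proof (cases "x = 0")
      case True then show ?thesis using permutes_not_in[OF perm, of 0] that by auto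
    next
      case False then have "\<sigma> x \<in> {1..j-1}" using permutes_in_image[OF perm, of x] that by auto
      then show ?thesis using j by auto
    qed
    show ?thesis
    proof
      fix x show "(\<pi> \<circ> \<pi>) x = id x"
        using lowj[of x] inv[of x] j by (auto simp: T_def)
    qed
  qed
qed

lemma id_A231: "A231 n id" by (auto simp: A231_def)
lemma id_A312: "A312 n id" by (auto simp: A312_def)

theorem theorem3p4:
  fixes n :: nat
  assumes "n \<ge> 1"
  shows "c n [2,3,1] [3,1,2] [2,3,1] = 2 ^ (n - 1) \<and>
         c n [3,1,2] [2,3,1] [3,1,2] = 2 ^ (n - 1)"
proof -
  have e1: "{\<pi>. \<pi> permutes {1..n} \<and> avoids n \<pi> [2,3,1] \<and> avoids n \<pi> [3,1,2]
                              \<and> avoids n (\<pi> \<circ> \<pi>) [2,3,1]} = S n"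
    unfolding avoids231 avoids312 using S_invol id_A231 by (auto simp: S_def)
  have e2: "{\<pi>. \<pi> permutes {1..n} \<and> avoids n \<pi> [3,1,2] \<and> avoids n \<pi> [2,3,1]
                              \<and> avoids n (\<pi> \<circ> \<pi>) [3,1,2]} = S n"
    unfolding avoids231 avoids312 using S_invol id_A312 by (auto simp: S_def)
  obtain m where m: "n = Suc m" using assms by (cases n) auto
  show ?thesis unfolding c_def e1 e2 using card_S m by simp
qed

end
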